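(* Let $k\ge 3$ be an integer, let $\mathcal H$ be a Hilbert space over $\mathbb K\in\{\mathbb R,\mathbb C\}$, and let $\mathbf{x}_1,\ldots,\mathbf{x}_k\in\mathcal H$ be norm one vectors. There exists a (nonzero) continuous symmetric $k$-linear form $T:\mathcal H\times\cdots\times\mathcal H\to\mathbb K$ attaining its norm at $(\mathbf{x}_1,\ldots,\mathbf{x}_k)$ if and only if $$\dim\big(\operatorname{span}\{\mathbf{x}_1,\ldots,\mathbf{x}_k\}\big)=\begin{cases}1 & \text{if } \mathbb K=\mathbb C,\\ 1 \text{ or } 2 & \text{if } \mathbb K=\mathbb R.\end{cases}$$
   Context: For a continuous $k$-linear form $T$ on $\mathcal H$, $\|T\|=\sup\{|T(\mathbf{w}_1,\ldots,\mathbf{w}_k)|:\|\mathbf{w}_1\|,\ldots,\|\mathbf{w}_k\|\le 1\}$. A nonzero $T$ attains its norm at $(\mathbf{x}_1,\ldots,\mathbf{x}_k)$, where the $\mathbf{x}_i$ are norm one vectors, if $\|T\|=|T(\mathbf{x}_1,\ldots,\mathbf{x}_k)|$. In the complex case, multilinear forms are $\mathbb C$-multilinear. *)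

theory Defs
  imports "HOL-Analysis.Analysis"
begin

class complex_vector = real_vector +
  fixes scaleC :: "complex \<Rightarrow> 'a \<Rightarrow> 'a"
  assumes scaleC_add_right: "scaleC a (x + y) = scaleC a x + scaleC a y"
    and scaleC_add_left: "scaleC (a + b) x = scaleC a x + scaleC b x"
    and scaleC_scaleC: "scaleC a (scaleC b x) = scaleC (a * b) x"
    and scaleC_one: "scaleC 1 x = x"
    and scaleR_scaleC: "scaleR r x = scaleC (complex_of_real r) x"

class complex_inner = complex_vector + real_normed_vector +
  fixes cinner :: "'a \<Rightarrow> 'a \<Rightarrow> complex"
  assumes cinner_commute: "cinner x y = cnj (cinner y x)"
    and cinner_add_left: "cinner (x + y) z = cinner x z + cinner y z"
    and cinner_scaleC_left: "cinner (scaleC r x) y = cnj r * cinner x y"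
    and cinner_ge_zero: "0 \<le> Re (cinner x x)"
    and cinner_eq_zero_iff: "cinner x x = 0 \<longleftrightarrow> x = 0"
    and norm_eq_sqrt_cinner: "norm x = sqrt (Re (cinner x x))"

text \<open>A k-linear form on a vector space (scalar multiplication sc over the field 's),
  represented as a function of argument families w :: nat => 'a, of which only the
  entries w 0, ..., w (k-1) matter.\<close>

definition multilinear_form ::
  "('s::field \<Rightarrow> 'a::ab_group_add \<Rightarrow> 'a) \<Rightarrow> nat \<Rightarrow> ((nat \<Rightarrow> 'a) \<Rightarrow> 's) \<Rightarrow> bool" where
  "multilinear_form sc k T \<longleftrightarrow>
     (\<forall>w w'. (\<forall>i<k. w i = w' i) \<longrightarrow> T w = T w') \<and>
     (\<forall>i<k. \<forall>w u v. T (w(i := u + v)) = T (w(i := u)) + T (w(i := v))) \<and>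
     (\<forall>i<k. \<forall>w c u. T (w(i := sc c u)) = c * T (w(i := u)))"

definition symmetric_form :: "nat \<Rightarrow> ((nat \<Rightarrow> 'a) \<Rightarrow> 's) \<Rightarrow> bool" where
  "symmetric_form k T \<longleftrightarrow> (\<forall>\<sigma> w. \<sigma> permutes {..<k} \<longrightarrow> T (w \<circ> \<sigma>) = T w)"

definition form_norm :: "nat \<Rightarrow> ((nat \<Rightarrow> 'a::real_normed_vector) \<Rightarrow> 's::real_normed_vector) \<Rightarrow> real" where
  "form_norm k T = Sup {norm (T w) | w. \<forall>i<k. norm (w i) \<le> 1}"

definition attains_norm_at ::
  "nat \<Rightarrow> ((nat \<Rightarrow> 'a::real_normed_vector) \<Rightarrow> 's::real_normed_vector) \<Rightarrow> (nat \<Rightarrow> 'a) \<Rightarrow> bool" where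
  "attains_norm_at k T x \<longleftrightarrow>
     (\<exists>w. T w \<noteq> 0) \<and> (\<forall>i<k. norm (x i) = 1) \<and> form_norm k T = norm (T x)"

end

theory Submission
  imports Defs
begin


locale ips =
  fixes inn :: "'a::real_normed_vector \<Rightarrow> 'a \<Rightarrow> real"
  assumes inn_sym: "inn x y = inn y x"
    and inn_add: "inn (x + y) z = inn x z + inn y z"
    and inn_scale: "inn (r *\<^sub>R x) y = r * inn x y"
    and norm_inn: "norm x = sqrt (inn x x)"
begin

lemma inn_add2: "inn z (x + y) = inn z x + inn z y"
  using inn_add inn_sym by metis

lemma inn_scale2: "inn y (r *\<^sub>R x) = r * inn y x"
  using inn_scale inn_sym by metis

lemma inn_zero[simp]: "inn 0 y = 0" "inn y 0 = 0"
  using inn_scale[of 0] inn_scale2[of _ 0] by auto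

lemma inn_minus: "inn (- x) y = - inn x y" "inn y (- x) = - inn y x"
  using inn_scale[of "-1"] inn_scale2[of _ "-1"] by auto

lemma inn_diff: "inn (x - y) z = inn x z - inn y z" "inn z (x - y) = inn z x - inn z y"
  using inn_add[of x "-y"] inn_add2[of z x "-y"] inn_minus by auto

lemma inn_self_nonneg: "inn x x \<ge> 0"
proof (rule ccontr)
  assume "\<not> ?thesis"
  then have "sqrt (inn x x) < 0" by simp
  then show False using norm_inn[of x] norm_ge_zero[of x] by linarith
qed

lemma inn_self: "inn x x = (norm x)^2"
  using norm_inn[of x] inn_self_nonneg[of x] by simp

lemma inn_self_eq0: "inn x x = 0 \<longleftrightarrow> x = 0"
  using inn_self[of x] by simp

lemma cs: "\<bar>inn x y\<bar> \<le> norm x * norm y"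
proof (cases "y = 0")
  case True then show ?thesis by simp
next
  case False
  define t where "t = inn x y / inn y y"
  have yy: "inn y y > 0" using False inn_self_nonneg inn_self_eq0
    by (metis order_le_less)
  have "0 \<le> inn (x - t *\<^sub>R y) (x - t *\<^sub>R y)" by (rule inn_self_nonneg)
  also have "\<dots> = inn x x - 2 * t * inn x y + t * t * inn y y"
    by (simp add: inn_diff inn_scale inn_scale2 inn_sym[of y x] algebra_simps)
  also have "\<dots> = inn x x - (inn x y)^2 / inn y y"
    using yy by (simp add: t_def field_simps power2_eq_square)
  finally have "(inn x y)^2 \<le> inn x x * inn y y"
    using yy by (simp add: field_simps)
  also have "\<dots> = (norm x * norm y)^2" by (simp add: inn_self power_mult_distrib)
  finally show ?thesis
    using abs_le_square_iff by (metis abs_mult abs_norm_cancel)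
qed

lemma functional_dir:
  fixes \<phi> :: "'a \<Rightarrow> real"
  assumes add: "\<And>a b. \<phi> (a + b) = \<phi> a + \<phi> b"
    and sc: "\<And>r a. \<phi> (r *\<^sub>R a) = r * \<phi> a"
    and bd: "\<And>z. \<phi> z \<le> norm z"
    and ny: "norm y = 1" and py: "\<phi> y = 1"
  shows "\<phi> z = inn y z"
proof -
  define z' where "z' = z - inn y z *\<^sub>R y"
  have yy: "inn y y = 1" using ny inn_self by simp
  have yz': "inn y z' = 0" by (simp add: z'_def inn_diff inn_scale2 yy)
  have phi_minus: "\<phi> (a - b) = \<phi> a - \<phi> b" for a b
    using add[of "a - b" b] by simp
  have dec: "\<phi> z = \<phi> z' + inn y z"
    using phi_minus[of z "inn y z *\<^sub>R y"] sc py by (simp add: z'_def)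
  define \<beta> where "\<beta> = \<phi> z'"
  have "\<beta> = 0"
  proof (rule ccontr)
    assume b0: "\<beta> \<noteq> 0"
    define n2 where "n2 = inn z' z'"
    have n2: "n2 \<ge> 0" using inn_self_nonneg n2_def by simp
    define s where "s = 1 / (n2 + 1)"
    have s: "s > 0" using n2 by (simp add: s_def)
    have sn: "s * n2 \<le> 1" using n2 by (simp add: s_def field_simps)
    define v where "v = y + (s * \<beta>) *\<^sub>R z'"
    have pv: "\<phi> v = 1 + s * \<beta>^2"
      using add sc py by (simp add: v_def \<beta>_def power2_eq_square)
    have vv: "inn v v = 1 + (s*\<beta>)^2 * n2"
      by (simp add: v_def inn_add inn_add2 inn_scale inn_scale2 yy yz' inn_sym[of z' y] n2_def
          power2_eq_square algebra_simps)
    have pos: "\<phi> v \<ge> 0" using pv s by simp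
    have "\<phi> v \<le> sqrt (inn v v)" using bd[of v] norm_inn by simp
    then have "(\<phi> v)^2 \<le> (sqrt (inn v v))^2"
      using pos by (intro power_mono) auto
    then have "(\<phi> v)^2 \<le> inn v v"
      using inn_self_nonneg[of v] by simp
    then have A: "1 + 2 * (s*\<beta>^2) + (s*\<beta>^2)^2 \<le> 1 + (s*\<beta>^2) * (s * n2)"
      unfolding pv vv by (simp add: power2_eq_square algebra_simps)
    have sb: "s*\<beta>^2 > 0" using s b0 by simp
    have "(s*\<beta>^2) * (s * n2) \<le> s*\<beta>^2" using sn sb by (simp add: mult_left_le)
    moreover have "(s*\<beta>^2)^2 \<ge> 0" by simp
    ultimately show False using A sb by linarith
  qed
  then show ?thesis using dec \<beta>_def by simp
qed

end


locale tri = ips inn for inn :: "'a::real_normed_vector \<Rightarrow> 'a \<Rightarrow> real" +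
  fixes P :: "'a \<Rightarrow> 'a \<Rightarrow> 'a \<Rightarrow> real"
  assumes P_add: "P (a + a') b c = P a b c + P a' b c"
    and P_scale: "P (r *\<^sub>R a) b c = r * P a b c"
    and P_sw12: "P a b c = P b a c"
    and P_sw23: "P a b c = P a c b"
    and P_bd: "\<bar>P a b c\<bar> \<le> norm a * norm b * norm c"
begin

lemma P_add2: "P a (b + b') c = P a b c + P a b' c"
  using P_add P_sw12 by metis
lemma P_add3: "P a b (c + c') = P a b c + P a b c'"
  using P_add2 P_sw23 by metis
lemma P_scale2: "P a (r *\<^sub>R b) c = r * P a b c"
  using P_scale P_sw12 by metis
lemma P_scale3: "P a b (r *\<^sub>R c) = r * P a b c"
  using P_scale2 P_sw23 by metis
lemma P_minus1: "P (- a) b c = - P a b c"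
  using P_scale[of "-1" a] by simp
lemma P_minus2: "P a (- b) c = - P a b c"
  using P_scale2[of a "-1" b] by simp
lemma P_diff1: "P (a - a') b c = P a b c - P a' b c"
  using P_add[of a "-a'"] P_minus1 by simp
lemma P_diff2: "P a (b - b') c = P a b c - P a b' c"
  using P_add2[of a b "-b'"] P_minus2 by simp

lemma P_sq_add: "P (a + b) (a + b) c = P a a c + 2 * P a b c + P b b c"
  using P_sw12[of b a c] by (simp add: P_add P_add2)
lemma P_sq_diff: "P (a - b) (a - b) c = P a a c - 2 * P a b c + P b b c"
  using P_sw12[of b a c] by (simp add: P_diff1 P_diff2)

lemma first_order:
  assumes "norm y1 = 1" "norm y2 = 1" "norm y3 = 1" "P y1 y2 y3 = 1"
  shows "P y1 y2 z = inn y3 z"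
proof (rule functional_dir[where \<phi> = "P y1 y2"])
  show "P y1 y2 (a + b) = P y1 y2 a + P y1 y2 b" for a b by (rule P_add3)
  show "P y1 y2 (r *\<^sub>R a) = r * P y1 y2 a" for r a by (rule P_scale3)
  show "P y1 y2 z \<le> norm z" for z
    using P_bd[of y1 y2 z] assms by simp
qed (use assms in auto)

lemma normalize:
  assumes "v \<noteq> 0"
  shows "norm ((1 / norm v) *\<^sub>R v) = 1"
  using assms by simp

lemma lemL:
  assumes ne: "norm e = 1" and ng: "norm g = 1" and p: "P e e g = 1"
  shows "P g g z = 2 * inn e g * inn e z - inn g z"
proof -
  have F1: "P e e z = inn g z" for z using first_order[OF ne ne ng p] .
  have peg: "P e g e = 1" using p P_sw23 by metis
  have F2: "P e g z = inn e z" for z using first_order[OF ne ng ne peg] .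
  have ee: "inn e e = 1" using ne inn_self by simp
  show ?thesis
  proof (cases "e + g = 0")
    case True
    then have g: "g = - e" by (simp add: eq_neg_iff_add_eq_0 add.commute)
    have "P g g z = P e e z" using g P_minus1 P_minus2 by simp
    also have "\<dots> = inn g z" by (rule F1)
    finally show ?thesis using g by (simp add: inn_minus ee)
  next
    case False
    define pp where "pp = e + g"
    define np where "np = norm pp"
    have np0: "np > 0" using False by (simp add: np_def pp_def)
    have np2: "np^2 = 2 + 2 * inn e g"
      using inn_self[of pp] by (simp add: np_def pp_def inn_add inn_add2 ee ng inn_self[of g] inn_sym[of g e])
    have Ppp: "P pp pp e = np^2"
    proof -
      have "P pp pp e = P e e e + 2 * P e g e + P g g e" unfolding pp_def by (rule P_sq_add)
      also have "P g g e = P e g g" using P_sw12 P_sw23 by metis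
      finally show ?thesis using F1[of e] F2[of g] peg np2 by (simp add: inn_sym[of g e])
    qed
    define q where "q = (1 / np) *\<^sub>R pp"
    have nq: "norm q = 1" using np0 by (simp add: q_def np_def)
    have Pqq: "P q q e = 1"
      using Ppp np0 by (simp add: q_def P_scale P_scale2 power2_eq_square)
    have Fq: "P q q z = inn e z" using first_order[OF nq nq ne Pqq] .
    have "P pp pp z = np^2 * P q q z"
      using np0 by (simp add: q_def P_scale P_scale2 power2_eq_square)
    then have "P e e z + 2 * P e g z + P g g z = np^2 * inn e z"
      using Fq P_sq_add pp_def by simp
    then show ?thesis using F1 F2 np2 by (simp add: algebra_simps)
  qed
qed

end

lemma tri_neg:
  assumes "tri inn P"
  shows "tri inn (\<lambda>a b c. - P a b c)"
proof -
  interpret tri inn P by fact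
  show ?thesis
    by unfold_locales (auto simp: P_add P_scale intro: P_sw12 P_sw23 P_bd[simplified abs_minus_cancel])
qed

context tri
begin

lemma core:
  assumes n1: "norm y1 = 1" and n2: "norm y2 = 1" and n3: "norm y3 = 1"
    and p: "P y1 y2 y3 = 1" and s0: "y1 + y2 \<noteq> 0" and d0: "y1 - y2 \<noteq> 0"
  shows "\<exists>a b. y3 = a *\<^sub>R y1 + b *\<^sub>R y2"
proof -
  have p2: "P y1 y3 y2 = 1" using p P_sw23 by metis
  have Fa: "P y1 y3 z = inn y2 z" for z using first_order[OF n1 n3 n2 p2] .
  have p3: "P y2 y3 y1 = 1" using p P_sw23 P_sw12 by metis
  have Fb: "P y2 y3 z = inn y1 z" for z using first_order[OF n2 n3 n1 p3] .
  have a1: "P y1 y1 y3 = inn y2 y1" using Fa[of y1] P_sw23 by metis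
  have a2: "P y2 y2 y3 = inn y1 y2" using Fb[of y2] P_sw23 by metis
  have i11: "inn y1 y1 = 1" using n1 inn_self by simp
  have i22: "inn y2 y2 = 1" using n2 inn_self by simp
  define s where "s = y1 + y2"
  define d where "d = y1 - y2"
  define ns where "ns = norm s"
  define nd where "nd = norm d"
  have ns0: "ns > 0" using s0 by (simp add: ns_def s_def)
  have nd0: "nd > 0" using d0 by (simp add: nd_def d_def)
  have ns2: "ns^2 = 2 + 2 * inn y1 y2"
    using inn_self[of s] by (simp add: ns_def s_def inn_add inn_add2 i11 i22 inn_sym[of y2 y1])
  have nd2: "nd^2 = 2 - 2 * inn y1 y2"
    using inn_self[of d] by (simp add: nd_def d_def inn_diff i11 i22 inn_sym[of y2 y1])
  have Pss: "P s s y3 = ns^2"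
    unfolding s_def using P_sq_add[of y1 y2 y3] a1 a2 p ns2 by (simp add: inn_sym[of y2 y1] s_def)
  have Pdd: "P d d y3 = -(nd^2)"
    unfolding d_def using P_sq_diff[of y1 y2 y3] a1 a2 p nd2 by (simp add: inn_sym[of y2 y1])
  define e where "e = (1/ns) *\<^sub>R s"
  define f where "f = (1/nd) *\<^sub>R d"
  have ne: "norm e = 1" using ns0 by (simp add: e_def ns_def)
  have nf: "norm f = 1" using nd0 by (simp add: f_def nd_def)
  have Pe: "P e e y3 = 1" using Pss ns0 by (simp add: e_def P_scale P_scale2 power2_eq_square)
  have Pf: "- P f f y3 = 1" using Pdd nd0 by (simp add: f_def P_scale P_scale2 power2_eq_square)
  interpret N: tri inn "\<lambda>a b c. - P a b c" by (rule tri_neg) (rule tri_axioms)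
  have L1: "P y3 y3 z = 2 * inn e y3 * inn e z - inn y3 z" for z using lemL[OF ne n3 Pe] .
  have L2: "- P y3 y3 z = 2 * inn f y3 * inn f z - inn y3 z" for z using N.lemL[OF nf n3 Pf] .
  define r where "r = y3 - inn e y3 *\<^sub>R e - inn f y3 *\<^sub>R f"
  have "inn r z = 0" for z
    using L1[of z] L2[of z] by (simp add: r_def inn_diff inn_scale)
  then have "inn r r = 0" by simp
  then have "r = 0" using inn_self_eq0 by simp
  moreover have "y3 = r + (inn e y3 *\<^sub>R e + inn f y3 *\<^sub>R f)" by (simp add: r_def)
  ultimately have "y3 = inn e y3 *\<^sub>R e + inn f y3 *\<^sub>R f" by simp
  also have "\<dots> = (inn e y3 / ns + inn f y3 / nd) *\<^sub>R y1 + (inn e y3 / ns - inn f y3 / nd) *\<^sub>R y2"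
    by (simp add: e_def f_def s_def d_def scaleR_add_right scaleR_diff_right scaleR_add_left scaleR_diff_left)
  finally show ?thesis by blast
qed

end



context
  fixes sc :: "'s::real_normed_field \<Rightarrow> 'a::real_normed_vector \<Rightarrow> 'a"
    and k :: nat and T :: "(nat \<Rightarrow> 'a) \<Rightarrow> 's"
  assumes ml: "multilinear_form sc k T"
    and sc_r: "\<And>r u. sc (of_real r) u = r *\<^sub>R u"
begin

lemma ml_add: "i < k \<Longrightarrow> T (w(i := u + v)) = T (w(i := u)) + T (w(i := v))"
  using ml unfolding multilinear_form_def by blast

lemma ml_sc: "i < k \<Longrightarrow> T (w(i := sc c u)) = c * T (w(i := u))"
  using ml unfolding multilinear_form_def by blast

lemma ml_cong: "(\<And>i. i < k \<Longrightarrow> w i = w' i) \<Longrightarrow> T w = T w'"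
  using ml unfolding multilinear_form_def by blast

lemma ml_zero: "i < k \<Longrightarrow> T (w(i := 0)) = 0"
  using ml_add[of i w 0 0] by simp

lemma ml_scaleR: "i < k \<Longrightarrow> T (w(i := r *\<^sub>R u)) = of_real r * T (w(i := u))"
  using ml_sc[of i w "of_real r" u] sc_r by simp

lemma ml_zero_slot: "i < k \<Longrightarrow> w i = 0 \<Longrightarrow> T w = 0"
  using ml_zero[of i w] by (metis fun_upd_triv)

lemma ml_scale_set:
  assumes "finite S" "S \<subseteq> {..<k}"
  shows "T (\<lambda>m. if m \<in> S then c m *\<^sub>R w m else w m) = (\<Prod>m\<in>S. of_real (c m)) * T w"
  using assms
proof (induction S rule: finite_induct)
  case empty then show ?case by simp
next
  case (insert i S)
  define g where "g = (\<lambda>m. if m \<in> S then c m *\<^sub>R w m else w m)"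
  have gi: "g i = w i" using insert by (simp add: g_def)
  have "(\<lambda>m. if m \<in> insert i S then c m *\<^sub>R w m else w m) = g(i := c i *\<^sub>R g i)"
    using insert(2) by (auto simp: g_def gi)
  then have "T (\<lambda>m. if m \<in> insert i S then c m *\<^sub>R w m else w m) = of_real (c i) * T (g(i := g i))"
    using ml_scaleR insert by simp
  also have "g(i := g i) = g" by simp
  also have "T g = (\<Prod>m\<in>S. of_real (c m)) * T w"
    using insert.IH insert.prems by (simp add: g_def)
  finally show ?case using insert by (simp add: mult.assoc)
qed

lemma ml_scale_all:
  "T (\<lambda>m. if m < k then c m *\<^sub>R w m else w m) = (\<Prod>m<k. of_real (c m)) * T w"
  using ml_scale_set[of "{..<k}" c w] by simp

lemma ml_T0: "0 < k \<Longrightarrow> T (\<lambda>_. 0) = 0"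
  using ml_zero_slot[of 0] by simp

lemma ml_bounded:
  assumes cont: "continuous_on UNIV T" and k0: "0 < k"
  shows "\<exists>B. \<forall>w. (\<forall>i<k. norm (w i) \<le> 1) \<longrightarrow> norm (T w) \<le> B"
proof -
  define U where "U = T -` ball 0 1"
  have "open (UNIV \<inter> T -` ball 0 1)"
    using continuous_on_open_vimage[OF open_UNIV, THEN iffD1, OF cont, rule_format, OF open_ball]
    by (simp add: Int_commute)
  then have oU: "open U" by (simp add: U_def)
  have zU: "(\<lambda>_. 0) \<in> U" using ml_T0[OF k0] by (simp add: U_def)
  obtain X where X: "(\<lambda>_. 0) \<in> (\<Pi>\<^sub>E i\<in>UNIV. X i)" "\<And>i. openin euclidean (X i)"
    "(\<Pi>\<^sub>E i\<in>UNIV. X i) \<subseteq> U"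
    using product_topology_open_contains_basis[of "\<lambda>i. euclidean" UNIV U "\<lambda>_. 0"] oU zU
    unfolding open_fun_def by auto
  have "\<forall>i\<in>{..<k}. \<exists>d. d > 0 \<and> ball 0 d \<subseteq> X i"
  proof
    fix i assume "i \<in> {..<k}"
    have "open (X i)" using X(2) by simp
    moreover have "(0::'a) \<in> X i" using X(1) by auto
    ultimately show "\<exists>d. d > 0 \<and> ball 0 d \<subseteq> X i"
      by (meson open_contains_ball)
  qed
  from bchoice[OF this] obtain d where d: "\<forall>i\<in>{..<k}. d i > 0 \<and> ball 0 (d i) \<subseteq> X i"
    by blast
  define \<delta> where "\<delta> = Min (d ` {..<k})"
  have \<delta>0: "\<delta> > 0" unfolding \<delta>_def using d k0 by (subst Min_gr_iff) auto
  have \<delta>le: "\<delta> \<le> d i" if "i < k" for i unfolding \<delta>_def by (rule Min_le) (use that in auto)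
  have small: "norm (T w) < 1" if w: "\<forall>i<k. norm (w i) < \<delta>" "\<forall>i. i \<ge> k \<longrightarrow> w i = 0" for w
  proof -
    have "w \<in> (\<Pi>\<^sub>E i\<in>UNIV. X i)"
    unfolding PiE_UNIV_domain
    proof (rule Pi_I)
      fix i show "w i \<in> X i"
      proof (cases "i < k")
        case True
        then have "w i \<in> ball 0 (d i)" using w \<delta>le[OF True] by auto
        moreover have "ball 0 (d i) \<subseteq> X i" using d True by simp
        ultimately show ?thesis by blast
      next
        case False then show ?thesis using w X(1) by auto
      qed
    qed
    then show ?thesis using X(3) by (auto simp: U_def)
  qed
  define B where "B = (2 / \<delta>) ^ k"
  have "norm (T w) \<le> B" if w: "\<forall>i<k. norm (w i) \<le> 1" for w
  proof -
    define w' where "w' = (\<lambda>m. if m < k then (\<delta>/2) *\<^sub>R w m else 0)"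
    have "T w' = T (\<lambda>m. if m < k then (\<lambda>_. \<delta>/2) m *\<^sub>R w m else w m)"
      by (rule ml_cong) (simp add: w'_def)
    also have "\<dots> = (\<Prod>m<k. of_real (\<delta>/2)) * T w" by (rule ml_scale_all)
    finally have Tw': "T w' = of_real ((\<delta>/2)^k) * T w" by simp
    have "norm (T w') < 1"
    proof (rule small)
      show "\<forall>i<k. norm (w' i) < \<delta>"
      proof (intro allI impI)
        fix i assume "i < k"
        then have "norm (w' i) = (\<delta>/2) * norm (w i)" using \<delta>0 by (simp add: w'_def)
        also have "\<dots> \<le> \<delta>/2" using w \<open>i < k\<close> \<delta>0 by (simp add: mult_left_le)
        finally show "norm (w' i) < \<delta>" using \<delta>0 by simp
      qed
    qed (simp add: w'_def)
    moreover have "norm (T w') = \<bar>(\<delta>/2)^k\<bar> * norm (T w)"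
      by (simp only: Tw' norm_mult norm_of_real)
    ultimately have "(\<delta>/2)^k * norm (T w) < 1"
      using \<delta>0 by simp
    then have "norm (T w) < 1 / (\<delta>/2)^k"
      using \<delta>0 by (simp add: field_simps)
    also have "\<dots> = B" by (simp add: B_def power_divide)
    finally show ?thesis by simp
  qed
  then show ?thesis by blast
qed

lemma fn_upper:
  assumes cont: "continuous_on UNIV T" and k0: "0 < k" and w: "\<forall>i<k. norm (w i) \<le> 1"
  shows "norm (T w) \<le> form_norm k T"
proof -
  obtain B where B: "\<forall>w. (\<forall>i<k. norm (w i) \<le> 1) \<longrightarrow> norm (T w) \<le> B"
    using ml_bounded[OF cont k0] by blast
  show ?thesis unfolding form_norm_def
    by (rule cSup_upper) (use w B in \<open>auto intro!: bdd_aboveI\<close>)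
qed

lemma fn_nonneg:
  assumes cont: "continuous_on UNIV T" and k0: "0 < k"
  shows "0 \<le> form_norm k T"
proof -
  have "norm (T (\<lambda>_. 0)) \<le> form_norm k T" by (rule fn_upper[OF cont k0]) simp
  then show ?thesis using norm_ge_zero order_trans by blast
qed

lemma fn_bound:
  assumes cont: "continuous_on UNIV T" and k0: "0 < k"
  shows "norm (T w) \<le> form_norm k T * (\<Prod>i<k. norm (w i))"
proof (cases "\<exists>i<k. w i = 0")
  case True
  then obtain i where "i < k" "w i = 0" by blast
  then have "T w = 0" by (rule ml_zero_slot)
  then show ?thesis using fn_nonneg[OF cont k0] by (simp add: prod_nonneg)
next
  case False
  define c where "c = (\<lambda>m. 1 / norm (w m))"
  define w' where "w' = (\<lambda>m. if m < k then c m *\<^sub>R w m else w m)"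
  have Tw': "T w' = (\<Prod>m<k. of_real (c m)) * T w" unfolding w'_def by (rule ml_scale_all)
  have "\<forall>i<k. norm (w' i) \<le> 1" using False by (simp add: w'_def c_def)
  then have F: "norm (T w') \<le> form_norm k T" by (rule fn_upper[OF cont k0])
  have c0: "c m \<ge> 0" for m by (simp add: c_def)
  have "norm (\<Prod>m<k. (of_real (c m) :: 's)) = (\<Prod>m<k. c m)"
    using c0 by (simp add: prod_norm[symmetric])
  then have E: "norm (T w') = (\<Prod>m<k. c m) * norm (T w)"
    using Tw' by (simp add: norm_mult)
  have CN: "(\<Prod>m<k. c m) * (\<Prod>i<k. norm (w i)) = 1"
    using False by (simp add: c_def prod.distrib[symmetric])
  have N0: "(\<Prod>i<k. norm (w i)) \<ge> 0" by (simp add: prod_nonneg)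
  have "norm (T w) = ((\<Prod>m<k. c m) * norm (T w)) * (\<Prod>i<k. norm (w i))"
    using CN by (simp add: algebra_simps)
  also have "\<dots> \<le> form_norm k T * (\<Prod>i<k. norm (w i))"
    using F E N0 by (simp add: mult_right_mono)
  finally show ?thesis .
qed

end



lemma upd3_perm:
  assumes "i \<noteq> j" "i \<noteq> l" "j \<noteq> l"
  shows "x(i := a, j := b, l := c) = (x(j := b, l := c))(i := a)"
    and "x(i := a, j := b, l := c) = (x(i := a, l := c))(j := b)"
  using assms by (auto simp: fun_eq_iff)

context
  fixes sc :: "'s::real_normed_field \<Rightarrow> 'a::real_normed_vector \<Rightarrow> 'a"
    and k :: nat and T :: "(nat \<Rightarrow> 'a) \<Rightarrow> 's"
    and inn :: "'a \<Rightarrow> 'a \<Rightarrow> real"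
    and LL :: "'s \<Rightarrow> real" and N :: real and x :: "nat \<Rightarrow> 'a" and i j l :: nat
  assumes ml: "multilinear_form sc k T"
    and sc_r: "\<And>r u. sc (of_real r) u = r *\<^sub>R u"
    and sym: "symmetric_form k T"
    and bnd: "\<And>w. norm (T w) \<le> N * (\<Prod>i<k. norm (w i))"
    and N0: "N > 0"
    and ips: "ips inn"
    and l_add: "\<And>s t. LL (s + t) = LL s + LL t"
    and l_scale: "\<And>r s. LL (of_real r * s) = r * LL s"
    and l_bd: "\<And>s. \<bar>LL s\<bar> \<le> norm s"
    and nx: "\<And>m. m < k \<Longrightarrow> norm (x m) = 1"
    and ijl: "i < k" "j < k" "l < k" "i \<noteq> j" "i \<noteq> l" "j \<noteq> l"
begin

definition PP :: "'a \<Rightarrow> 'a \<Rightarrow> 'a \<Rightarrow> real" where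
  "PP a b c = LL (T (x(i := a, j := b, l := c))) / N"

lemma T_swap:
  assumes "p < k" "q < k"
  shows "T (w \<circ> Transposition.transpose p q) = T w"
  using sym assms permutes_swap_id[of p "{..<k}" q] unfolding symmetric_form_def by auto

lemma PP_tri: "tri inn PP"
proof -
  interpret ips inn by (rule ips)
  show ?thesis
  proof (unfold_locales)
    fix a a' b c
    show "PP (a + a') b c = PP a b c + PP a' b c"
      unfolding PP_def upd3_perm(1)[OF ijl(4-6)]
      using ml_add[OF ml sc_r, of i] ijl l_add by (simp add: add_divide_distrib)
  next
    fix r a b c
    show "PP (r *\<^sub>R a) b c = r * PP a b c"
      unfolding PP_def upd3_perm(1)[OF ijl(4-6)]
      using ml_scaleR[OF ml sc_r, of i] ijl l_scale by simp
  next
    fix a b c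
    have "x(i := a, j := b, l := c) = (x(i := b, j := a, l := c)) \<circ> Transposition.transpose i j"
      using ijl by (auto simp: fun_eq_iff Transposition.transpose_def)
    then show "PP a b c = PP b a c"
      unfolding PP_def using T_swap[of i j] ijl by simp
  next
    fix a b c
    have "x(i := a, j := b, l := c) = (x(i := a, j := c, l := b)) \<circ> Transposition.transpose j l"
      using ijl by (auto simp: fun_eq_iff Transposition.transpose_def)
    then show "PP a b c = PP a c b"
      unfolding PP_def using T_swap[of j l] ijl by simp
  next
    fix a b c
    define w where "w = x(i := a, j := b, l := c)"
    have wm: "norm (w m) = (if m = i then norm a else 1) * (if m = j then norm b else 1) *
        (if m = l then norm c else 1)" if "m < k" for m
      using that ijl nx by (auto simp: w_def)
    have "(\<Prod>m<k. norm (w m)) = (\<Prod>m<k. (if m = i then norm a else 1) * (if m = j then norm b else 1) *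
        (if m = l then norm c else 1))"
      by (rule prod.cong) (auto simp: wm)
    also have "\<dots> = norm a * norm b * norm c"
      using ijl by (simp add: prod.distrib)
    finally have pw: "(\<Prod>m<k. norm (w m)) = norm a * norm b * norm c" .
    have "\<bar>LL (T w)\<bar> \<le> N * (norm a * norm b * norm c)"
      using l_bd[of "T w"] bnd[of w] pw by simp
    moreover have "\<bar>PP a b c\<bar> = \<bar>LL (T w)\<bar> / N"
      unfolding PP_def w_def using N0 by simp
    ultimately show "\<bar>PP a b c\<bar> \<le> norm a * norm b * norm c"
      using N0 by (simp add: pos_divide_le_eq algebra_simps)
  qed
qed

lemma PP_x: "PP (x i) (x j) (x l) = LL (T x) / N"
  unfolding PP_def by simp

lemma ctx_core:
  assumes "norm y1 = 1" "norm y2 = 1" "norm y3 = 1" "LL (T (x(i := y1, j := y2, l := y3))) = N"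
    "y1 + y2 \<noteq> 0" "y1 - y2 \<noteq> 0"
  shows "\<exists>a b. y3 = a *\<^sub>R y1 + b *\<^sub>R y2"
proof -
  interpret tri inn PP by (rule PP_tri)
  show ?thesis by (rule core) (use assms N0 in \<open>auto simp: PP_def\<close>)
qed

end



lemma prod_upd_remove:
  fixes k :: nat
  assumes "i < k"
  shows "(\<Prod>m<k. g ((w(i := u)) m)) = g u * (\<Prod>m\<in>{..<k} - {i}. g (w m))"
proof -
  have "(\<Prod>m<k. g ((w(i := u)) m)) = g ((w(i := u)) i) * (\<Prod>m\<in>{..<k} - {i}. g ((w(i := u)) m))"
    using assms by (subst prod.remove[of _ i]) auto
  also have "(\<Prod>m\<in>{..<k} - {i}. g ((w(i := u)) m)) = (\<Prod>m\<in>{..<k} - {i}. g (w m))"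
    by (rule prod.cong) auto
  finally show ?thesis by simp
qed

lemma prod_permute_lt:
  assumes "\<sigma> permutes {..<k}"
  shows "(\<Prod>m<k. g ((w \<circ> \<sigma>) m)) = (\<Prod>m<k. g (w m))"
proof -
  have "(\<Prod>m<k. g (w m)) = (\<Prod>m\<in>\<sigma> ` {..<k}. g (w m))"
    using permutes_image[OF assms] by simp
  also have "\<dots> = (\<Prod>m<k. g (w (\<sigma> m)))"
    using prod.reindex[OF permutes_inj_on[OF assms], of "\<lambda>m. g (w m)"] by simp
  finally show ?thesis by simp
qed

lemma real_construct:
  fixes e f :: "'a::real_inner" and x :: "nat \<Rightarrow> 'a"
  assumes ne: "norm e = 1" and ef: "inner e f = 0" and nf: "f = 0 \<or> norm f = 1"
    and xs: "\<forall>i<k. \<exists>a b. x i = a *\<^sub>R e + b *\<^sub>R f" and nx: "\<forall>i<k. norm (x i) = 1"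
  shows "\<exists>T :: (nat \<Rightarrow> 'a) \<Rightarrow> real.
            multilinear_form scaleR k T \<and> symmetric_form k T \<and> continuous_on UNIV T \<and>
            attains_norm_at k T x"
proof -
  define z where "z = (\<lambda>w. complex_of_real (inner e w) + \<i> * complex_of_real (inner f w))"
  have z_add: "z (u + v) = z u + z v" for u v by (simp add: z_def inner_add_right algebra_simps)
  have z_scale: "z (r *\<^sub>R u) = of_real r * z u" for r u by (simp add: z_def algebra_simps)
  have ee: "inner e e = 1" using ne by (simp add: dot_square_norm)
  have z_bd: "cmod (z w) \<le> norm w" for w
  proof -
    have cz: "cmod (z w) = sqrt ((inner e w)^2 + (inner f w)^2)"
      by (simp add: z_def cmod_def)
    have "(inner e w)^2 + (inner f w)^2 \<le> (norm w)^2"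
    proof (cases "f = 0")
      case True
      have "\<bar>inner e w\<bar> \<le> norm e * norm w" by (rule Cauchy_Schwarz_ineq2)
      then have "(inner e w)^2 \<le> (norm w)^2" using ne by (metis abs_le_square_iff abs_norm_cancel mult_1)
      then show ?thesis using True by simp
    next
      case False
      then have ff: "inner f f = 1" using nf by (simp add: dot_square_norm)
      have "0 \<le> inner (w - inner e w *\<^sub>R e - inner f w *\<^sub>R f) (w - inner e w *\<^sub>R e - inner f w *\<^sub>R f)"
        by simp
      also have "\<dots> = inner w w - (inner e w)^2 - (inner f w)^2"
        by (simp add: inner_diff_left inner_diff_right ee ff ef inner_commute[of f e]
            inner_commute[of w e] inner_commute[of w f] power2_eq_square algebra_simps)
      finally show ?thesis by (simp add: dot_square_norm)
    qed
    then show ?thesis unfolding cz by (metis norm_ge_zero real_le_lsqrt real_sqrt_le_iff sqrt_le_D) 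
  qed
  have z_x: "cmod (z (x i)) = 1" if ik: "i < k" for i
  proof -
    obtain a b where ab: "x i = a *\<^sub>R e + b *\<^sub>R f" using xs ik by blast
    have n1: "(norm (x i))^2 = 1" using nx ik by simp
    show ?thesis
    proof (cases "f = 0")
      case True
      then have "x i = a *\<^sub>R e" using ab by simp
      then have "a^2 = 1" using n1 ne by simp
      then have "\<bar>a\<bar> = 1" using power2_eq_1_iff by fastforce
      moreover have "z (x i) = of_real a" using True ab ee by (simp add: z_def)
      ultimately show ?thesis by simp
    next
      case False
      then have ff: "inner f f = 1" using nf by (simp add: dot_square_norm)
      have "(norm (x i))^2 = a^2 + b^2"
        unfolding dot_square_norm[symmetric] ab
        by (simp add: inner_add_left inner_add_right ee ff ef inner_commute[of f e] power2_eq_square)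
      moreover have "z (x i) = of_real a + \<i> * of_real b"
        unfolding z_def ab by (simp add: inner_add_right ee ff ef inner_commute[of f e])
      ultimately have "cmod (z (x i)) = sqrt 1" using n1 by (simp add: cmod_def)
      then show ?thesis by simp
    qed
  qed
  define PI where "PI = (\<Prod>i<k. z (x i))"
  have P1: "cmod PI = 1" using z_x by (simp add: PI_def prod_norm[symmetric])
  define T where "T = (\<lambda>w::nat \<Rightarrow> 'a. Re (cnj PI * (\<Prod>i<k. z (w i))))"
  have Tx: "T x = 1"
  proof -
    have "cnj PI * PI = complex_of_real ((cmod PI)^2)" by (simp only: complex_norm_square mult.commute)
    moreover have "T x = Re (cnj PI * PI)" unfolding T_def PI_def ..
    ultimately show ?thesis using P1 by simp
  qed
  have Tb: "\<bar>T w\<bar> \<le> (\<Prod>i<k. norm (w i))" for w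
  proof -
    have "\<bar>T w\<bar> \<le> cmod (cnj PI * (\<Prod>i<k. z (w i)))" unfolding T_def by (rule abs_Re_le_cmod)
    also have "\<dots> = (\<Prod>i<k. cmod (z (w i)))" using P1 by (simp add: norm_mult prod_norm)
    also have "\<dots> \<le> (\<Prod>i<k. norm (w i))" by (rule prod_mono) (simp add: z_bd)
    finally show ?thesis .
  qed
  have ml: "multilinear_form scaleR k T"
    unfolding multilinear_form_def
  proof (intro conjI allI impI)
    fix w w' :: "nat \<Rightarrow> 'a" assume "\<forall>i<k. w i = w' i"
    then show "T w = T w'" unfolding T_def by (metis (no_types, lifting) lessThan_iff prod.cong)
  next
    fix i w u v assume i: "i < k"
    show "T (w(i := u + v)) = T (w(i := u)) + T (w(i := v))"
      unfolding T_def prod_upd_remove[OF i] z_add by (simp add: algebra_simps)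
  next
    fix i w c u assume i: "i < k"
    show "T (w(i := c *\<^sub>R u)) = c * T (w(i := u))"
      unfolding T_def prod_upd_remove[OF i] z_scale
      by (simp add: algebra_simps)
  qed
  have sy: "symmetric_form k T"
    unfolding symmetric_form_def T_def using prod_permute_lt by metis
  have co: "continuous_on UNIV T"
    unfolding T_def z_def by (intro continuous_intros) (simp_all add: continuous_on_product_coordinates)
  have fn: "form_norm k T = 1"
    unfolding form_norm_def
  proof (rule cSup_eq_maximum)
    show "1 \<in> {norm (T w) |w. \<forall>i<k. norm (w i) \<le> 1}"
    proof -
      have "1 = norm (T x) \<and> (\<forall>i<k. norm (x i) \<le> 1)" using Tx nx by simp
      then show ?thesis by blast
    qed
  next
    fix y assume "y \<in> {norm (T w) |w. \<forall>i<k. norm (w i) \<le> 1}"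
    then obtain w where y: "y = norm (T w)" and w: "\<forall>i<k. norm (w i) \<le> 1" by blast
    have "(\<Prod>i<k. norm (w i)) \<le> 1" using w by (intro prod_le_1) auto
    then show "y \<le> 1" using Tb[of w] y by simp
  qed
  have "attains_norm_at k T x"
    unfolding attains_norm_at_def using Tx nx fn by (auto intro!: exI[of _ x])
  then show ?thesis using ml sy co by blast
qed



lemma ips_inner: "ips (inner :: 'a::real_inner \<Rightarrow> 'a \<Rightarrow> real)"
proof
  show "inner x y = inner y x" for x y :: 'a by (rule inner_commute)
  show "inner (x + y) z = inner x z + inner y z" for x y z :: 'a by (rule inner_add_left)
  show "inner (r *\<^sub>R x) y = r * inner x y" for r and x y :: 'a by (rule inner_scaleR_left)
  show "norm x = sqrt (inner x x)" for x :: 'a by (rule norm_eq_sqrt_inner)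
qed

context vector_space
begin

lemma indep_le_dim_span:
  assumes "finite S" "independent B" "B \<subseteq> span S"
  shows "card B \<le> dim (span S)"
proof -
  obtain A where A: "A \<subseteq> span S" "independent A" "span S \<subseteq> span A" "card A = dim (span S)"
    using basis_exists[of "span S"] by blast
  have "finite A" using independent_span_bound[OF assms(1) A(2) A(1)] by blast
  moreover have "B \<subseteq> span A" using assms(3) A(3) by blast
  ultimately have "card B \<le> card A" using independent_span_bound[OF _ assms(2)] by blast
  then show ?thesis using A(4) by simp
qed

end

lemma real_dim_bounds:
  fixes S B :: "'a::real_vector set"
  assumes "x0 \<in> S" "x0 \<noteq> 0" "S \<subseteq> span B" "finite B" "card B \<le> 2" "finite S"
  shows "dim (span S) \<in> {1, 2}"
proof -
  have "dim S \<le> card B" using assms by (intro dim_le_card) auto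
  moreover have "card {x0} \<le> dim (span S)"
    by (rule real_vector.indep_le_dim_span) (use assms in \<open>auto intro!: independent_insertI span_base\<close>)
  ultimately show ?thesis using assms by auto
qed

lemma span2_decomp:
  fixes p q v :: "'a::real_vector"
  assumes "v \<in> span {p, q}"
  shows "\<exists>a b. v = a *\<^sub>R p + b *\<^sub>R q"
proof -
  obtain a where "v - a *\<^sub>R p \<in> span {q}" using assms span_breakdown_eq by blast
  then obtain b where "v - a *\<^sub>R p = b *\<^sub>R q" using span_singleton by blast
  then have "v = a *\<^sub>R p + b *\<^sub>R q" by (simp add: algebra_simps)
  then show ?thesis by blast
qed

lemma real_part:
  fixes k :: nat and x :: "nat \<Rightarrow> 'a::{real_inner, complete_space}"
  assumes k3: "k \<ge> 3" and nx: "\<forall>i<k. norm (x i) = 1"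
  shows "(\<exists>T :: (nat \<Rightarrow> 'a) \<Rightarrow> real.
            multilinear_form scaleR k T \<and> symmetric_form k T \<and> continuous_on UNIV T \<and>
            attains_norm_at k T x)
         \<longleftrightarrow> dim (span (x ` {..<k})) \<in> {1, 2}"
proof
  have k0: "0 < k" using k3 by simp
  have x00: "x 0 \<noteq> 0" using nx k0 by auto
  assume "\<exists>T :: (nat \<Rightarrow> 'a) \<Rightarrow> real.
            multilinear_form scaleR k T \<and> symmetric_form k T \<and> continuous_on UNIV T \<and>
            attains_norm_at k T x"
  then obtain T :: "(nat \<Rightarrow> 'a) \<Rightarrow> real" where ml: "multilinear_form scaleR k T"
    and sy: "symmetric_form k T" and co: "continuous_on UNIV T" and at: "attains_norm_at k T x"
    by blast
  define N where "N = form_norm k T"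
  have sc_r: "\<And>r u. scaleR (of_real r) u = r *\<^sub>R (u::'a)" by simp
  have bnd: "\<And>w. norm (T w) \<le> N * (\<Prod>i<k. norm (w i))"
    unfolding N_def by (rule fn_bound[OF ml sc_r co k0])
  obtain w0 where w0: "T w0 \<noteq> 0" and NT: "N = norm (T x)"
    using at unfolding attains_norm_at_def N_def by blast
  have N0: "N > 0"
  proof (rule ccontr)
    assume "\<not> N > 0"
    then have "N \<le> 0" by simp
    moreover have "0 \<le> (\<Prod>i<k. norm (w0 i))" by (simp add: prod_nonneg)
    ultimately have "norm (T w0) \<le> 0" using bnd[of w0] by (metis mult_nonpos_nonneg order_trans)
    then show False using w0 by simp
  qed
  define LL where "LL = (\<lambda>s::real. s * T x / N)"
  have LLx: "LL (T x) = N"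
  proof -
    have "T x * T x = N * N" using NT by (simp add: abs_mult_self_eq)
    then show ?thesis using N0 by (simp add: LL_def)
  qed
  have l_add: "\<And>s t. LL (s + t) = LL s + LL t" by (simp add: LL_def algebra_simps add_divide_distrib)
  have l_scale: "\<And>r s. LL (of_real r * s) = r * LL s" by (simp add: LL_def)
  have l_bd: "\<bar>LL s\<bar> \<le> norm s" for s
  proof -
    have "\<bar>LL s\<bar> = \<bar>s\<bar> * \<bar>T x\<bar> / N" using N0 by (simp add: LL_def abs_mult)
    also have "\<dots> = \<bar>s\<bar>" using NT N0 by simp
    finally show ?thesis by simp
  qed
  have nx': "\<And>m. m < k \<Longrightarrow> norm (x m) = 1" using nx by simp
  show "dim (span (x ` {..<k})) \<in> {1, 2}"
  proof (cases "\<forall>m<k. x m = x 0 \<or> x m = - x 0")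
    case True
    show ?thesis
    proof (rule real_dim_bounds[of "x 0" _ "{x 0}"])
      show "x ` {..<k} \<subseteq> span {x 0}"
      proof
        fix v assume "v \<in> x ` {..<k}"
        then obtain l where "l < k" "v = x l" by auto
        then have "v = x 0 \<or> v = - x 0" using True by blast
        then show "v \<in> span {x 0}" by (metis span_base span_neg singletonI)
      qed
    qed (use k0 x00 in auto)
  next
    case False
    then obtain m where m: "m < k" "x m \<noteq> x 0" "x m \<noteq> - x 0" by blast
    have m0: "m \<noteq> 0" using m by (metis gr0I)
    have "x l \<in> span {x 0, x m}" if l: "l < k" for l
    proof (cases "l = 0 \<or> l = m")
      case True then show ?thesis by (auto intro: span_base)
    next
      case False
      have "\<exists>a b. x l = a *\<^sub>R x 0 + b *\<^sub>R x m"
      proof (rule ctx_core[where sc=scaleR and k=k and T=T and inn=inner and LL=LL and N=N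
            and x=x and i=0 and j=m and l=l, OF ml sc_r sy bnd N0 ips_inner l_add l_scale l_bd nx'])
        show "LL (T (x(0 := x 0, m := x m, l := x l))) = N" using LLx by simp
        show "x 0 + x m \<noteq> 0" using m by (metis add.commute eq_neg_iff_add_eq_0)
        show "x 0 - x m \<noteq> 0" using m by simp
      qed (use k0 m m0 l False nx in auto)
      then obtain a b where ab: "x l = a *\<^sub>R x 0 + b *\<^sub>R x m" by blast
      have "x 0 \<in> span {x 0, x m}" "x m \<in> span {x 0, x m}" by (auto intro: span_base)
      then show ?thesis unfolding ab by (intro span_add span_scale)
    qed
    then show ?thesis
      by (intro real_dim_bounds[of "x 0" _ "{x 0, x m}"]) (use k0 x00 in \<open>auto simp: card_insert_if\<close>)
  qed
next
  assume dimS: "dim (span (x ` {..<k})) \<in> {1, 2}"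
  have k0: "0 < k" using k3 by simp
  have x00: "x 0 \<noteq> 0" using nx k0 by auto
  have ne: "norm (x 0) = 1" using nx k0 by simp
  show "\<exists>T :: (nat \<Rightarrow> 'a) \<Rightarrow> real.
            multilinear_form scaleR k T \<and> symmetric_form k T \<and> continuous_on UNIV T \<and>
            attains_norm_at k T x"
  proof (cases "\<forall>l<k. x l \<in> span {x 0}")
    case True
    show ?thesis
    proof (rule real_construct[of "x 0" 0])
      show "\<forall>i<k. \<exists>a b. x i = a *\<^sub>R x 0 + b *\<^sub>R 0"
      proof (intro allI impI)
        fix i assume "i < k"
        then have "x i \<in> span {x 0}" using True by blast
        then obtain a where "x i = a *\<^sub>R x 0" using span_singleton by blast
        then show "\<exists>a b. x i = a *\<^sub>R x 0 + b *\<^sub>R 0" by auto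
      qed
    qed (use ne nx in auto)
  next
    case False
    then obtain m where m: "m < k" "x m \<notin> span {x 0}" by blast
    have allin: "x l \<in> span {x 0, x m}" if l: "l < k" for l
    proof (rule ccontr)
      assume nl: "x l \<notin> span {x 0, x m}"
      have i1: "independent {x 0}" using x00 by (auto intro!: independent_insertI)
      have i2: "independent (insert (x m) {x 0})" by (rule independent_insertI[OF m(2) i1])
      have i3: "independent (insert (x l) (insert (x m) {x 0}))"
        by (rule independent_insertI[OF _ i2]) (use nl in \<open>simp add: insert_commute\<close>)
      have d1: "x l \<noteq> x m" "x l \<noteq> x 0" using nl by (auto intro: span_base)
      have d2: "x m \<noteq> x 0" using m by (auto intro: span_base)
      have "card (insert (x l) (insert (x m) {x 0})) \<le> dim (span (x ` {..<k}))"
        by (rule real_vector.indep_le_dim_span[OF _ i3]) (use l m k0 in \<open>auto intro: span_base\<close>)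
      then show False using d1 d2 dimS by auto
    qed
    define g where "g = x m - inner (x 0) (x m) *\<^sub>R x 0"
    have g0: "g \<noteq> 0"
    proof
      assume "g = 0"
      then have "x m = inner (x 0) (x m) *\<^sub>R x 0" by (simp add: g_def)
      then have "x m \<in> span {x 0}" by (metis span_base span_scale singletonI)
      then show False using m by simp
    qed
    define f where "f = (1 / norm g) *\<^sub>R g"
    have ee: "inner (x 0) (x 0) = 1" using ne by (simp add: dot_square_norm)
    show ?thesis
    proof (rule real_construct[of "x 0" f])
      show "inner (x 0) f = 0" by (simp add: f_def g_def inner_diff_right ee)
      show "f = 0 \<or> norm f = 1" using g0 by (simp add: f_def)
      show "\<forall>i<k. \<exists>a b. x i = a *\<^sub>R x 0 + b *\<^sub>R f"
      proof (intro allI impI)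
        fix i assume "i < k"
        then obtain a b where ab: "x i = a *\<^sub>R x 0 + b *\<^sub>R x m" using allin span2_decomp by blast
        obtain c where c: "c = inner (x 0) (x m)" by blast
        have xm: "x m = c *\<^sub>R x 0 + norm g *\<^sub>R f"
          using g0 c by (simp add: f_def g_def)
        have "x i = (a + b * c) *\<^sub>R x 0 + (b * norm g) *\<^sub>R f"
          using ab xm by (simp add: algebra_simps)
        then show "\<exists>a b. x i = a *\<^sub>R x 0 + b *\<^sub>R f" by blast
      qed
    qed (use ne nx in auto)
  qed
qed



lemma cv_vs: "vector_space (scaleC :: complex \<Rightarrow> 'a::complex_vector \<Rightarrow> 'a)"
  by unfold_locales (simp_all add: scaleC_add_right scaleC_add_left scaleC_scaleC scaleC_one)

lemma cinner_self_real: "cinner x x = complex_of_real (Re (cinner x x))"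
proof -
  have "cinner x x = cnj (cinner x x)" by (rule cinner_commute)
  then have "Im (cinner x x) = 0" by (metis cnj.simps(2) neg_equal_zero)
  then show ?thesis by (simp add: complex_eq_iff)
qed

lemma cinner_add_right: "cinner z (x + y) = cinner z x + cinner z y"
  by (metis cinner_commute cinner_add_left complex_cnj_add)

lemma cinner_scaleC_right: "cinner z (scaleC c x) = c * cinner z x"
  by (metis cinner_commute cinner_scaleC_left complex_cnj_cnj complex_cnj_mult)

lemma cinner_self_norm: "Re (cinner x x) = (norm x)^2"
  using norm_eq_sqrt_cinner[of x] cinner_ge_zero[of x] by simp

lemma norm_scaleC: "norm (scaleC c x) = cmod c * norm (x::'a::complex_inner)"
proof -
  have "cinner (scaleC c x) (scaleC c x) = cnj c * c * cinner x x"
    by (simp add: cinner_scaleC_left cinner_scaleC_right)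
  also have "cnj c * c = complex_of_real ((cmod c)^2)" by (simp only: complex_norm_square mult.commute)
  finally have "Re (cinner (scaleC c x) (scaleC c x)) = (cmod c)^2 * Re (cinner x x)" by simp
  then have "(norm (scaleC c x))^2 = (cmod c * norm x)^2" by (simp add: cinner_self_norm power_mult_distrib)
  then show ?thesis by (simp add: power2_eq_iff_nonneg)
qed

lemma ips_cinner: "ips (\<lambda>x y::'a::complex_inner. Re (cinner x y))"
proof
  show "Re (cinner x y) = Re (cinner y x)" for x y :: 'a by (subst cinner_commute) simp
  show "Re (cinner (x + y) z) = Re (cinner x z) + Re (cinner y z)" for x y z :: 'a
    by (simp add: cinner_add_left)
  show "Re (cinner (r *\<^sub>R x) y) = r * Re (cinner x y)" for r and x y :: 'a
    by (simp add: scaleR_scaleC cinner_scaleC_left)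
  show "norm x = sqrt (Re (cinner x x))" for x :: 'a by (rule norm_eq_sqrt_cinner)
qed

lemma cinner_cs: "cmod (cinner x y) \<le> norm x * norm (y::'a::complex_inner)"
proof (cases "cinner x y = 0")
  case True then show ?thesis by simp
next
  case False
  interpret ips "\<lambda>x y::'a. Re (cinner x y)" by (rule ips_cinner)
  define \<theta> where "\<theta> = cinner x y"
  define c where "c = cnj \<theta> / complex_of_real (cmod \<theta>)"
  have c1: "cmod c = 1" using False by (simp add: c_def \<theta>_def norm_divide)
  have "cinner x (scaleC c y) = c * \<theta>" by (simp add: cinner_scaleC_right \<theta>_def)
  also have "c * \<theta> = complex_of_real (cmod \<theta>)"
  proof -
    have sq: "cnj \<theta> * \<theta> = complex_of_real ((cmod \<theta>)^2)" by (simp only: complex_norm_square mult.commute)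
    have "c * \<theta> = (cnj \<theta> * \<theta>) / complex_of_real (cmod \<theta>)" by (simp add: c_def)
    also have "\<dots> = complex_of_real ((cmod \<theta>)^2) / complex_of_real (cmod \<theta>)" by (simp only: sq)
    also have "\<dots> = complex_of_real (cmod \<theta>)" using False by (simp add: \<theta>_def power2_eq_square)
    finally show ?thesis .
  qed
  finally have "Re (cinner x (scaleC c y)) = cmod \<theta>" by simp
  moreover have "\<bar>Re (cinner x (scaleC c y))\<bar> \<le> norm x * norm (scaleC c y)" by (rule cs)
  ultimately show ?thesis using c1 by (simp add: norm_scaleC \<theta>_def)
qed

lemma cont_cinner: "continuous_on UNIV (\<lambda>w::nat \<Rightarrow> 'a::complex_inner. cinner e (w i))"
proof -
  have bl: "bounded_linear (cinner e)"
  proof (rule bounded_linear_intro[where K = "norm e"])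
    show "cinner e (x + y) = cinner e x + cinner e y" for x y by (rule cinner_add_right)
    show "cinner e (r *\<^sub>R x) = r *\<^sub>R cinner e x" for r x
      by (simp add: scaleR_scaleC cinner_scaleC_right scaleR_conv_of_real)
    show "norm (cinner e x) \<le> norm x * norm e" for x using cinner_cs[of e x] by (simp add: mult.commute)
  qed
  have "continuous_on UNIV (cinner e \<circ> (\<lambda>w::nat \<Rightarrow> 'a. w i))"
    by (rule continuous_on_compose) (auto intro: linear_continuous_on[OF bl])
  then show ?thesis by (simp add: o_def)
qed

lemma complex_construct:
  fixes x :: "nat \<Rightarrow> 'a::complex_inner"
  assumes ne: "norm (x 0) = 1" and xs: "\<forall>i<k. \<exists>g. x i = scaleC g (x 0)"
    and nx: "\<forall>i<k. norm (x i) = 1"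
  shows "\<exists>T :: (nat \<Rightarrow> 'a) \<Rightarrow> complex.
            multilinear_form scaleC k T \<and> symmetric_form k T \<and> continuous_on UNIV T \<and>
            attains_norm_at k T x"
proof -
  define z where "z = cinner (x 0)"
  have z_add: "z (u + v) = z u + z v" for u v by (simp add: z_def cinner_add_right)
  have z_scale: "z (scaleC c u) = c * z u" for c u by (simp add: z_def cinner_scaleC_right)
  have z_bd: "cmod (z w) \<le> norm w" for w using cinner_cs[of "x 0" w] ne by (simp add: z_def)
  have e1: "cinner (x 0) (x 0) = 1"
    using cinner_self_real[of "x 0"] cinner_self_norm[of "x 0"] ne by simp
  have z_x: "cmod (z (x i)) = 1" if ik: "i < k" for i
  proof -
    obtain g where g: "x i = scaleC g (x 0)" using xs ik by blast
    have "cmod g = 1" using nx[rule_format, OF ik] ne g norm_scaleC[of g "x 0"] by simp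
    then show ?thesis using g e1 by (simp add: z_scale z_def[symmetric])
  qed
  define PI where "PI = (\<Prod>i<k. z (x i))"
  have P1: "cmod PI = 1" using z_x by (simp add: PI_def prod_norm[symmetric])
  define T where "T = (\<lambda>w::nat \<Rightarrow> 'a. cnj PI * (\<Prod>i<k. z (w i)))"
  have Tx: "T x = 1"
  proof -
    have "cnj PI * PI = complex_of_real ((cmod PI)^2)" by (simp only: complex_norm_square mult.commute)
    moreover have "T x = cnj PI * PI" unfolding T_def PI_def ..
    ultimately show ?thesis using P1 by simp
  qed
  have Tb: "norm (T w) \<le> (\<Prod>i<k. norm (w i))" for w
  proof -
    have "norm (T w) = (\<Prod>i<k. cmod (z (w i)))" using P1 by (simp add: T_def norm_mult prod_norm)
    also have "\<dots> \<le> (\<Prod>i<k. norm (w i))" by (rule prod_mono) (simp add: z_bd)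
    finally show ?thesis .
  qed
  have ml: "multilinear_form scaleC k T"
    unfolding multilinear_form_def
  proof (intro conjI allI impI)
    fix w w' :: "nat \<Rightarrow> 'a" assume "\<forall>i<k. w i = w' i"
    then show "T w = T w'" unfolding T_def by (metis (no_types, lifting) lessThan_iff prod.cong)
  next
    fix i w u v assume i: "i < k"
    show "T (w(i := u + v)) = T (w(i := u)) + T (w(i := v))"
      unfolding T_def prod_upd_remove[OF i] z_add by (simp add: algebra_simps)
  next
    fix i w c u assume i: "i < k"
    show "T (w(i := scaleC c u)) = c * T (w(i := u))"
      unfolding T_def prod_upd_remove[OF i] z_scale by (simp add: algebra_simps)
  qed
  have sy: "symmetric_form k T"
    unfolding symmetric_form_def T_def using prod_permute_lt by metis
  have co: "continuous_on UNIV T"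
    unfolding T_def z_def by (intro continuous_intros cont_cinner)
  have fn: "form_norm k T = 1"
    unfolding form_norm_def
  proof (rule cSup_eq_maximum)
    show "1 \<in> {norm (T w) |w. \<forall>i<k. norm (w i) \<le> 1}"
    proof -
      have "1 = norm (T x) \<and> (\<forall>i<k. norm (x i) \<le> 1)" using Tx nx by simp
      then show ?thesis by blast
    qed
  next
    fix y assume "y \<in> {norm (T w) |w. \<forall>i<k. norm (w i) \<le> 1}"
    then obtain w where y: "y = norm (T w)" and w: "\<forall>i<k. norm (w i) \<le> 1" by blast
    have "(\<Prod>i<k. norm (w i)) \<le> 1" using w by (intro prod_le_1) auto
    then show "y \<le> 1" using Tb[of w] y by simp
  qed
  have "attains_norm_at k T x"
    unfolding attains_norm_at_def using Tx nx fn by (auto intro!: exI[of _ x])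
  then show ?thesis using ml sy co by blast
qed



lemma complex_part:
  fixes k :: nat and x :: "nat \<Rightarrow> 'b::{complex_inner, complete_space}"
  assumes k3: "k \<ge> 3" and nx: "\<forall>i<k. norm (x i) = 1"
  shows "(\<exists>T :: (nat \<Rightarrow> 'b) \<Rightarrow> complex.
            multilinear_form scaleC k T \<and> symmetric_form k T \<and> continuous_on UNIV T \<and>
            attains_norm_at k T x)
         \<longleftrightarrow> vector_space.dim (scaleC :: complex \<Rightarrow> 'b \<Rightarrow> 'b)
                (module.span (scaleC :: complex \<Rightarrow> 'b \<Rightarrow> 'b) (x ` {..<k})) = 1"
proof -
  interpret cv: vector_space "scaleC :: complex \<Rightarrow> 'b \<Rightarrow> 'b" by (rule cv_vs)
  have k0: "0 < k" using k3 by simp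
  have x00: "x 0 \<noteq> 0" using nx k0 by auto
  have ne: "norm (x 0) = 1" using nx k0 by simp
  have ind0: "cv.independent {x 0}" using x00 by (auto intro!: cv.independent_insertI)
  show ?thesis
  proof
    assume "\<exists>T :: (nat \<Rightarrow> 'b) \<Rightarrow> complex.
            multilinear_form scaleC k T \<and> symmetric_form k T \<and> continuous_on UNIV T \<and>
            attains_norm_at k T x"
    then obtain T :: "(nat \<Rightarrow> 'b) \<Rightarrow> complex" where ml: "multilinear_form scaleC k T"
      and sy: "symmetric_form k T" and co: "continuous_on UNIV T" and at: "attains_norm_at k T x"
      by blast
    define N where "N = form_norm k T"
    have sc_r: "\<And>r u. scaleC (of_real r) u = r *\<^sub>R (u::'b)" by (simp add: scaleR_scaleC)
    have bnd: "\<And>w. norm (T w) \<le> N * (\<Prod>i<k. norm (w i))"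
      unfolding N_def by (rule fn_bound[OF ml sc_r co k0])
    obtain w0 where w0: "T w0 \<noteq> 0" and NT: "N = norm (T x)"
      using at unfolding attains_norm_at_def N_def by blast
    have N0: "N > 0"
    proof (rule ccontr)
      assume "\<not> N > 0"
      then have "N \<le> 0" by simp
      moreover have "0 \<le> (\<Prod>i<k. norm (w0 i))" by (simp add: prod_nonneg)
      ultimately have "norm (T w0) \<le> 0" using bnd[of w0] by (metis mult_nonpos_nonneg order_trans)
      then show False using w0 by simp
    qed
    define LL where "LL = (\<lambda>s::complex. Re (cnj (T x) * s) / N)"
    have LLx: "LL (T x) = N"
    proof -
      have sq: "cnj (T x) * T x = complex_of_real ((cmod (T x))^2)" by (simp only: complex_norm_square mult.commute)
      have "LL (T x) = Re (cnj (T x) * T x) / N" by (simp only: LL_def)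
      also have "\<dots> = (cmod (T x))^2 / N" by (simp only: sq Re_complex_of_real)
      also have "\<dots> = N" using NT N0 by (simp add: power2_eq_square)
      finally show ?thesis .
    qed
    have l_add: "\<And>s t. LL (s + t) = LL s + LL t" by (simp add: LL_def algebra_simps add_divide_distrib)
    have l_scale: "\<And>r s. LL (of_real r * s) = r * LL s" by (simp add: LL_def algebra_simps)
    have l_bd: "\<bar>LL s\<bar> \<le> norm s" for s
    proof -
      have "\<bar>LL s\<bar> = \<bar>Re (cnj (T x) * s)\<bar> / N" using N0 by (simp add: LL_def)
      also have "\<dots> \<le> cmod (cnj (T x) * s) / N" using N0 abs_Re_le_cmod[of "cnj (T x) * s"] by (intro divide_right_mono) simp_all
      also have "\<dots> = cmod s" using NT N0 by (simp add: norm_mult)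
      finally show ?thesis by simp
    qed
    have nx': "\<And>m. m < k \<Longrightarrow> norm (x m) = 1" using nx by simp
    have ips: "ips (\<lambda>x y::'b. Re (cinner x y))" by (rule ips_cinner)
    have mult: "\<exists>g. x m = scaleC g (x 0)" if m: "m < k" for m
    proof (cases "m = 0 \<or> x m = x 0 \<or> x m = - x 0")
      case True
      then show ?thesis
      proof (elim disjE)
        assume "m = 0" then show ?thesis by (metis scaleC_one)
      next
        assume "x m = x 0" then show ?thesis by (metis scaleC_one)
      next
        assume "x m = - x 0" then have "x m = scaleC (-1) (x 0)" by simp
        then show ?thesis by blast
      qed
    next
      case False
      then have m0: "m \<noteq> 0" and xm1: "x m \<noteq> x 0" and xm2: "x m \<noteq> - x 0" by auto
      define l where "l = (if m = 1 then 2 else 1::nat)"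
      have l: "l < k" "l \<noteq> 0" "l \<noteq> m" using k3 m0 by (auto simp: l_def)
      have xl0: "x l \<noteq> 0" using nx l by auto
      have core: "\<exists>a b. x l = a *\<^sub>R y1 + b *\<^sub>R y2"
        if "norm y1 = 1" "norm y2 = 1" "LL (T (x(0 := y1, m := y2, l := x l))) = N"
          "y1 + y2 \<noteq> 0" "y1 - y2 \<noteq> 0" for y1 y2
        by (rule ctx_core[where sc=scaleC and k=k and T=T and inn="\<lambda>x y. Re (cinner x y)" and LL=LL
            and N=N and x=x and i=0 and j=m and l=l, OF ml sc_r sy bnd N0 ips l_add l_scale l_bd nx'])
          (use that k0 m m0 l nx in auto)
      have s1: "x 0 + x m \<noteq> 0" using xm2 by (metis add.commute eq_neg_iff_add_eq_0)
      have s2: "x 0 - x m \<noteq> 0" using xm1 by simp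
      obtain a b where ab: "x l = a *\<^sub>R x 0 + b *\<^sub>R x m"
        using core[of "x 0" "x m"] ne nx' m LLx s1 s2 by auto
      define y1 where "y1 = scaleC \<i> (x 0)"
      define y2 where "y2 = scaleC (- \<i>) (x m)"
      have ny1: "norm y1 = 1" using ne by (simp add: y1_def norm_scaleC)
      have ny2: "norm y2 = 1" using nx' m by (simp add: y2_def norm_scaleC)
      have Ty: "T (x(0 := y1, m := y2, l := x l)) = T x"
      proof -
        define w1 where "w1 = x(0 := scaleC \<i> (x 0))"
        have eq: "x(0 := y1, m := y2, l := x l) = w1(m := scaleC (- \<i>) (x m))"
          using l m0 by (auto simp: fun_eq_iff y1_def y2_def w1_def)
        have A: "T (w1(m := scaleC (- \<i>) (x m))) = (- \<i>) * T (w1(m := x m))"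
          by (rule ml_sc[OF ml sc_r m])
        have B: "w1(m := x m) = w1" using m0 by (auto simp: w1_def fun_eq_iff)
        have C: "T w1 = \<i> * T (x(0 := x 0))" unfolding w1_def by (rule ml_sc[OF ml sc_r k0])
        have "T (x(0 := y1, m := y2, l := x l)) = (- \<i>) * (\<i> * T (x(0 := x 0)))"
          unfolding eq A B C ..
        then show ?thesis by simp
      qed
      have t1: "y1 + y2 = scaleC \<i> (x 0 - x m)"
        by (simp add: y1_def y2_def cv.scale_right_diff_distrib)
      have t2: "y1 - y2 = scaleC \<i> (x 0 + x m)"
        by (simp add: y1_def y2_def scaleC_add_right)
      obtain c d where cd: "x l = c *\<^sub>R y1 + d *\<^sub>R y2"
        using core[of y1 y2] ny1 ny2 Ty LLx t1 t2 s1 s2 by auto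
      have E1: "x l = scaleC (of_real a) (x 0) + scaleC (of_real b) (x m)"
        using ab by (simp add: scaleR_scaleC)
      have E2: "x l = scaleC (of_real c * \<i>) (x 0) + scaleC (- (of_real d * \<i>)) (x m)"
        using cd by (simp add: scaleR_scaleC y1_def y2_def scaleC_scaleC)
      define \<alpha> where "\<alpha> = complex_of_real a - of_real c * \<i>"
      define \<beta> where "\<beta> = - (complex_of_real d * \<i>) - of_real b"
      have E: "scaleC \<alpha> (x 0) = scaleC \<beta> (x m)"
      proof -
        have "scaleC \<alpha> (x 0) = scaleC (of_real a) (x 0) - scaleC (of_real c * \<i>) (x 0)"
          by (simp add: \<alpha>_def cv.scale_left_diff_distrib)
        also have "\<dots> = scaleC (- (of_real d * \<i>)) (x m) - scaleC (of_real b) (x m)"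
          using E1 E2 by (simp add: algebra_simps)
        also have "\<dots> = scaleC \<beta> (x m)" by (simp add: \<beta>_def cv.scale_left_diff_distrib)
        finally show ?thesis .
      qed
      show ?thesis
      proof (cases "\<beta> = 0")
        case False
        have "scaleC (\<alpha> / \<beta>) (x 0) = scaleC (inverse \<beta>) (scaleC \<alpha> (x 0))"
          by (simp add: scaleC_scaleC divide_inverse mult.commute)
        also have "\<dots> = scaleC (inverse \<beta>) (scaleC \<beta> (x m))" using E by simp
        also have "\<dots> = x m" using False by (simp add: scaleC_scaleC scaleC_one)
        finally have "x m = scaleC (\<alpha> / \<beta>) (x 0)" by simp
        then show ?thesis by blast
      next
        case True
        then have "b = 0" "d = 0" by (simp_all add: \<beta>_def complex_eq_iff)
        moreover have "\<alpha> = 0" using E True x00 by simp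
        then have "a = 0" "c = 0" by (simp_all add: \<alpha>_def complex_eq_iff)
        ultimately have "x l = 0" using ab by simp
        then show ?thesis using xl0 by simp
      qed
    qed
    have sub: "x ` {..<k} \<subseteq> cv.span {x 0}"
    proof
      fix v assume "v \<in> x ` {..<k}"
      then obtain m where "m < k" "v = x m" by auto
      then obtain g where "v = scaleC g (x 0)" using mult by blast
      then show "v \<in> cv.span {x 0}" by (simp add: cv.span_base cv.span_scale)
    qed
    have "cv.dim (x ` {..<k}) \<le> card {x 0}" by (rule cv.dim_le_card[OF sub]) simp
    moreover have "card {x 0} \<le> cv.dim (cv.span (x ` {..<k}))"
      by (rule cv.indep_le_dim_span[OF _ ind0]) (use k0 in \<open>auto intro: cv.span_base\<close>)
    ultimately show "cv.dim (cv.span (x ` {..<k})) = 1" by simp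
  next
    assume d1: "cv.dim (cv.span (x ` {..<k})) = 1"
    have "\<forall>i<k. \<exists>g. x i = scaleC g (x 0)"
    proof (intro allI impI)
      fix l assume l: "l < k"
      have "x l \<in> cv.span {x 0}"
      proof (rule ccontr)
        assume nl: "x l \<notin> cv.span {x 0}"
        have i2: "cv.independent (insert (x l) {x 0})" by (rule cv.independent_insertI[OF nl ind0])
        have dd: "x l \<noteq> x 0" using nl by (auto intro: cv.span_base)
        have "card (insert (x l) {x 0}) \<le> cv.dim (cv.span (x ` {..<k}))"
          by (rule cv.indep_le_dim_span[OF _ i2]) (use l k0 in \<open>auto intro: cv.span_base\<close>)
        then show False using d1 dd by simp
      qed
      then show "\<exists>g. x l = scaleC g (x 0)" using cv.span_singleton by blast
    qed
    then show "\<exists>T :: (nat \<Rightarrow> 'b) \<Rightarrow> complex.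
            multilinear_form scaleC k T \<and> symmetric_form k T \<and> continuous_on UNIV T \<and>
            attains_norm_at k T x"
      by (rule complex_construct[OF ne _ nx])
  qed
qed

theorem theorem1p1:
  fixes k :: nat
  assumes "k \<ge> 3"
  shows
    "(\<forall>x :: nat \<Rightarrow> 'a::{real_inner, complete_space}.
        (\<forall>i<k. norm (x i) = 1) \<longrightarrow>
        ((\<exists>T :: (nat \<Rightarrow> 'a) \<Rightarrow> real.
            multilinear_form scaleR k T \<and> symmetric_form k T \<and> continuous_on UNIV T \<and>
            attains_norm_at k T x)
         \<longleftrightarrow> dim (span (x ` {..<k})) \<in> {1, 2}))
     \<and>
     (\<forall>x :: nat \<Rightarrow> 'b::{complex_inner, complete_space}.
        (\<forall>i<k. norm (x i) = 1) \<longrightarrow>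
        ((\<exists>T :: (nat \<Rightarrow> 'b) \<Rightarrow> complex.
            multilinear_form scaleC k T \<and> symmetric_form k T \<and> continuous_on UNIV T \<and>
            attains_norm_at k T x)
         \<longleftrightarrow> vector_space.dim (scaleC :: complex \<Rightarrow> 'b \<Rightarrow> 'b)
                (module.span (scaleC :: complex \<Rightarrow> 'b \<Rightarrow> 'b) (x ` {..<k})) = 1))"
  using real_part[OF assms] complex_part[OF assms] by blast


end
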